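(* Let $\sqsubset$ be a precedence on a finite signature $\mathcal F$ with rank function $\mathrm{rk}$, and let $(G,l,r)$ be a constructor graph rewrite rule with $G{\restriction}r\sqsubset_{\mathrm{pt}}G{\restriction}l$. Let $G_L\in\mathcal{TG}_{\mathrm{nrm}}(\mathcal F)$ be a closed instance of $G{\restriction}l$ (i.e. a closed term graph with a homomorphism $\psi:G{\restriction}l\to G_L$ mapping $l$ to $\rho_{G_L}$), and let $G_R\in\mathcal{TG}_{\mathrm{nrm}}(\mathcal F)$ be the corresponding closed instance of $G{\restriction}r$ (obtained by instantiating each unlabeled node $x$ of $G{\restriction}r$ with $G_L{\restriction}\psi(x)$, i.e. the result of rewriting $G_L$ at its root with the redex $((G,l,r),\psi)$). If $|G{\restriction}r|\le\ell$ for a positive integer $\ell$, then $\pi_\ell(G_R)<\pi_\ell(G_L)$.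
   Context: Term graphs. $\mathcal F=\mathcal C\cup\mathcal D$ is a finite signature (constructors and defined symbols, disjoint) with arity function $\mathrm{ar}$. A labeled graph consists of a finite acyclic directed graph $(V_G,E_G)$, a partial labeling $\mathrm{lab}_G:V_G\to\mathcal F$ and a successor function $\mathrm{att}_G:V_G\to V_G^*$ such that $\mathrm{att}_G(v)$ has length $\mathrm{ar}(\mathrm{lab}_G(v))$ if $v$ is labeled and is empty otherwise, and the set of entries of $\mathrm{att}_G(v)$ equals $\{u:(v,u)\in E_G\}$. Unlabeled nodes act as variables. A term graph additionally has a root $\rho_G$ from which every node is reachable; $\mathcal{TG}(\mathcal C)$ denotes term graphs whose labeled nodes carry constructors. $G{\restriction}v$ is the sub-term graph of nodes reachable from $v$; $H\subseteq G$ means $H=G{\restriction}v$ for some $v$. $|G|=|V_G|$. $\mathrm{depth}(G)$ is the length of a longest path from $\rho_G$. $G$ is closed if every node is labeled; basic if $\mathrm{lab}_G(\rho_G)\in\mathcal D$ and $G{\restriction}v\in\mathcal{TG}(\mathcal C)$ for every successor $v$ of $\rho_G$. Homomorphisms preserve labels, successor sequences (at labeled nodes only) and the normal/safe split. A graph rewrite rule $(K,l,r)$ is a labeled graph with distinct nodes $l,r$, every unlabeled node of $K{\restriction}r$ lying in $K{\restriction}l$; it is a constructor rule if $K{\restriction}l$ is basic. Argument separation. The argument positions of each $f\in\mathcal F$ are split into normal and safe ones; constructors have only safe positions; nodes with the same label have the same separation. $\mathrm{nrm}(v)$ (resp. $\mathrm{safe}(v)$) is the set of successors of $v$ at normal (resp.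 safe) positions. $H\sqsubset_{\mathrm{nrm}}G$ means $H\subseteq G{\restriction}v$ for some $v\in\mathrm{nrm}(\rho_G)$. Precedence. A precedence $\sqsubset$ is a well-founded strict partial order on $\mathcal F$ with all constructors minimal, with a rank function $\mathrm{rk}:\mathcal F\to\mathbb N$ compatible with it ($g\sqsubset f$ implies $\mathrm{rk}(g)<\mathrm{rk}(f)$). $H\sqsubset_{\mathrm{pt}}G$ holds if $\mathrm{lab}_H(v)\sqsubset\mathrm{lab}_G(\rho_G)$ for every labeled node $v$ of $H$ and either (1) $H=G{\restriction}u$ or $H\sqsubset_{\mathrm{pt}}G{\restriction}u$ for some successor $u$ of $\rho_G$; or (2) $\rho_H$ is labeled, $H{\restriction}v\sqsubset_{\mathrm{nrm}}G$ for each $v\in\mathrm{nrm}(\rho_H)$, and $H{\restriction}v\sqsubset_{\mathrm{pt}}G$ for each $v\in\mathrm{safe}(\rho_H)$. Safe paths and $\mathcal{TG}_{\mathrm{nrm}}$. A path is safe if each next node is a safe successor of the previous one; $\mathrm{SP}_G(v)$ is the set of nodes lying on a safe path from $v$ (including $v$), and $\mathrm{SP}_G=\mathrm{SP}_G(\rho_G)$. $G\in\mathcal{TG}_{\mathrm{nrm}}(\mathcal F)$ iff $G\in\mathcal{TG}(\mathcal C)$, or $G{\restriction}v\in\mathcal{TG}(\mathcal C)$ for all $v\in\mathrm{nrm}(\rho_G)$ and $G{\restriction}v\in\mathcal{TG}_{\mathrm{nrm}}(\mathcal F)$ for all $v\in\mathrm{safe}(\rho_G)$. Interpretation. For a positive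 integer $\ell$ and a closed term graph $G$ with labeled root, let $\mathrm{pj}_\ell(G)=(1+\ell)^{2\,\mathrm{rk}(\mathrm{lab}_G(\rho_G))}\cdot\big(1+\sum_{u\in\mathrm{nrm}(\rho_G)}\mathrm{depth}(G{\restriction}u)\big)$, and for $G\in\mathcal{TG}_{\mathrm{nrm}}(\mathcal F)$ closed let $\pi_\ell(G)=\sum\{\mathrm{pj}_\ell(G{\restriction}v) : v\in\mathrm{SP}_G,\ G{\restriction}v\notin\mathcal{TG}(\mathcal C)\}$ (so $\pi_\ell(G)=0$ if $G\in\mathcal{TG}(\mathcal C)$). *)

theory Defs
  imports Main
begin

text \<open>A signature: constructors, defined symbols, arity, and the set of
  normal argument positions of each symbol (all other positions below the
  arity are safe).\<close>
record 'f sig =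
  cons :: "'f set"
  defs :: "'f set"
  ar   :: "'f \<Rightarrow> nat"
  nrmp :: "'f \<Rightarrow> nat set"

definition syms :: "'f sig \<Rightarrow> 'f set" where
  "syms S = cons S \<union> defs S"

definition wf_sig :: "'f sig \<Rightarrow> bool" where
  "wf_sig S \<longleftrightarrow> finite (syms S) \<and> cons S \<inter> defs S = {}
     \<and> (\<forall>f. nrmp S f \<subseteq> {..<ar S f})
     \<and> (\<forall>c\<in>cons S. nrmp S c = {})"

definition precedence :: "'f sig \<Rightarrow> ('f \<Rightarrow> 'f \<Rightarrow> bool) \<Rightarrow> ('f \<Rightarrow> nat) \<Rightarrow> bool" where
  "precedence S prec rk \<longleftrightarrow>
     (\<forall>f g. prec g f \<longrightarrow> f \<in> syms S \<and> g \<in> syms S)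
   \<and> (\<forall>f. \<not> prec f f)
   \<and> (\<forall>f g h. prec f g \<longrightarrow> prec g h \<longrightarrow> prec f h)
   \<and> wfP prec
   \<and> (\<forall>c\<in>cons S. \<forall>g. \<not> prec g c)
   \<and> (\<forall>f g. prec g f \<longrightarrow> rk g < rk f)"

text \<open>Outside the node set
  the labeling is None and the successor list empty (normal form, so that
  equality of graphs is equality of records).\<close>
record ('v, 'f) lgraph =
  nodes :: "'v set"
  lab   :: "'v \<Rightarrow> 'f option"
  att   :: "'v \<Rightarrow> 'v list"

record ('v, 'f) tgraph = "('v, 'f) lgraph" +
  root :: 'v

definition edges :: "('v, 'f, 'z) lgraph_scheme \<Rightarrow> ('v \<times> 'v) set" where
  "edges G = {(v, u). v \<in> nodes G \<and> u \<in> set (att G v)}"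

definition wf_lgraph :: "'f sig \<Rightarrow> ('v, 'f, 'z) lgraph_scheme \<Rightarrow> bool" where
  "wf_lgraph S G \<longleftrightarrow> finite (nodes G)
     \<and> acyclic (edges G)
     \<and> (\<forall>v\<in>nodes G. set (att G v) \<subseteq> nodes G)
     \<and> (\<forall>v\<in>nodes G. case lab G v of
           None \<Rightarrow> att G v = []
         | Some f \<Rightarrow> f \<in> syms S \<and> length (att G v) = ar S f)
     \<and> (\<forall>v. v \<notin> nodes G \<longrightarrow> lab G v = None \<and> att G v = [])"

definition reach :: "('v, 'f, 'z) lgraph_scheme \<Rightarrow> 'v \<Rightarrow> 'v set" where
  "reach G v = {u. (v, u) \<in> (edges G)\<^sup>*}"

definition wf_tgraph :: "'f sig \<Rightarrow> ('v, 'f) tgraph \<Rightarrow> bool" where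
  "wf_tgraph S G \<longleftrightarrow> wf_lgraph S G \<and> root G \<in> nodes G \<and> nodes G = reach G (root G)"

definition restr :: "('v, 'f, 'z) lgraph_scheme \<Rightarrow> 'v \<Rightarrow> ('v, 'f) tgraph" where
  "restr G v = \<lparr> nodes = reach G v,
                 lab = (\<lambda>u. if u \<in> reach G v then lab G u else None),
                 att = (\<lambda>u. if u \<in> reach G v then att G u else []),
                 root = v \<rparr>"

definition gpath :: "('v, 'f, 'z) lgraph_scheme \<Rightarrow> 'v list \<Rightarrow> bool" where
  "gpath G xs \<longleftrightarrow> xs \<noteq> [] \<and> (\<forall>i. Suc i < length xs \<longrightarrow> (xs ! i, xs ! Suc i) \<in> edges G)"

definition depth :: "('v, 'f) tgraph \<Rightarrow> nat" where
  "depth G = Max {length xs - 1 | xs. gpath G xs \<and> hd xs = root G}"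

definition closed :: "('v, 'f, 'z) lgraph_scheme \<Rightarrow> bool" where
  "closed G \<longleftrightarrow> (\<forall>v\<in>nodes G. lab G v \<noteq> None)"

definition tg_C :: "'f sig \<Rightarrow> ('v, 'f, 'z) lgraph_scheme \<Rightarrow> bool" where
  "tg_C S G \<longleftrightarrow> (\<forall>v\<in>nodes G. \<forall>f. lab G v = Some f \<longrightarrow> f \<in> cons S)"

definition basic :: "'f sig \<Rightarrow> ('v, 'f) tgraph \<Rightarrow> bool" where
  "basic S G \<longleftrightarrow> (\<exists>f\<in>defs S. lab G (root G) = Some f)
     \<and> (\<forall>v\<in>set (att G (root G)). tg_C S (restr G v))"

definition nrm :: "'f sig \<Rightarrow> ('v, 'f, 'z) lgraph_scheme \<Rightarrow> 'v \<Rightarrow> 'v set" where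
  "nrm S G v = {att G v ! i | i. i < length (att G v) \<and> lab G v \<noteq> None
                                 \<and> i \<in> nrmp S (the (lab G v))}"

definition safe :: "'f sig \<Rightarrow> ('v, 'f, 'z) lgraph_scheme \<Rightarrow> 'v \<Rightarrow> 'v set" where
  "safe S G v = {att G v ! i | i. i < length (att G v) \<and> lab G v \<noteq> None
                                 \<and> i \<notin> nrmp S (the (lab G v))}"

definition nrm_sub :: "'f sig \<Rightarrow> ('v, 'f) tgraph \<Rightarrow> ('v, 'f) tgraph \<Rightarrow> bool" where
  "nrm_sub S H G \<longleftrightarrow> (\<exists>v\<in>nrm S G (root G). \<exists>w\<in>nodes (restr G v).
       H = restr (restr G v) w)"

inductive pt :: "'f sig \<Rightarrow> ('f \<Rightarrow> 'f \<Rightarrow> bool) \<Rightarrow> ('v, 'f) tgraph \<Rightarrow> ('v, 'f) tgraph \<Rightarrow> bool"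
  for S prec where
  pt_sub: "\<lbrakk> \<forall>v\<in>nodes H. \<forall>f. lab H v = Some f \<longrightarrow> prec f (the (lab G (root G)));
            u \<in> set (att G (root G));
            H = restr G u \<or> pt S prec H (restr G u) \<rbrakk> \<Longrightarrow> pt S prec H G"
| pt_ctx: "\<lbrakk> \<forall>v\<in>nodes H. \<forall>f. lab H v = Some f \<longrightarrow> prec f (the (lab G (root G)));
            lab H (root H) \<noteq> None;
            \<forall>v\<in>nrm S H (root H). nrm_sub S (restr H v) G;
            \<forall>v\<in>safe S H (root H). pt S prec (restr H v) G \<rbrakk> \<Longrightarrow> pt S prec H G"

inductive tg_nrm :: "'f sig \<Rightarrow> ('v, 'f) tgraph \<Rightarrow> bool" for S where
  nrm_C: "tg_C S G \<Longrightarrow> tg_nrm S G"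
| nrm_step: "\<lbrakk> \<forall>v\<in>nrm S G (root G). tg_C S (restr G v);
              \<forall>v\<in>safe S G (root G). tg_nrm S (restr G v) \<rbrakk> \<Longrightarrow> tg_nrm S G"

definition graph_rule :: "'f sig \<Rightarrow> ('v, 'f) lgraph \<Rightarrow> 'v \<Rightarrow> 'v \<Rightarrow> bool" where
  "graph_rule S K l r \<longleftrightarrow> wf_lgraph S K \<and> l \<in> nodes K \<and> r \<in> nodes K \<and> l \<noteq> r
     \<and> (\<forall>v\<in>reach K r. lab K v = None \<longrightarrow> v \<in> reach K l)"

definition constructor_rule :: "'f sig \<Rightarrow> ('v, 'f) lgraph \<Rightarrow> 'v \<Rightarrow> 'v \<Rightarrow> bool" where
  "constructor_rule S K l r \<longleftrightarrow> graph_rule S K l r \<and> basic S (restr K l)"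

text \<open>Homomorphism of term graphs (preserves root, labels and successor
  lists at labeled nodes; the normal/safe split is preserved automatically
  since it is determined by the label).\<close>
definition is_hom :: "('v, 'f) tgraph \<Rightarrow> ('w, 'f) tgraph \<Rightarrow> ('v \<Rightarrow> 'w) \<Rightarrow> bool" where
  "is_hom H G \<psi> \<longleftrightarrow> (\<forall>v\<in>nodes H. \<psi> v \<in> nodes G) \<and> \<psi> (root H) = root G
     \<and> (\<forall>v\<in>nodes H. lab H v \<noteq> None \<longrightarrow>
            lab G (\<psi> v) = lab H v \<and> att G (\<psi> v) = map \<psi> (att H v))"

text \<open>Result of rewriting G_L at its root with redex ((K,l,r),psi), after
  garbage collection: nodes of K restricted at r that do not lie in K
  restricted at l are fresh (Inl), nodes of K restricted at l are mapped via
  psi into G_L (Inr), in particular every unlabeled node x of K restricted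
  at r is instantiated by G_L restricted at psi x.\<close>
definition rw_root :: "('v, 'f) lgraph \<Rightarrow> 'v \<Rightarrow> 'v \<Rightarrow> ('v \<Rightarrow> 'w) \<Rightarrow> ('w, 'f) tgraph
                        \<Rightarrow> ('v + 'w, 'f) tgraph" where
  "rw_root K l r \<psi> GL =
    (let Ll = reach K l; Rr = reach K r;
         \<phi> = (\<lambda>u. if u \<in> Ll then Inr (\<psi> u) else Inl u);
         H = \<lparr> nodes = Inl ` (Rr - Ll) \<union> Inr ` nodes GL,
               lab = (\<lambda>x. case x of Inl v \<Rightarrow> if v \<in> Rr - Ll then lab K v else None
                                 | Inr w \<Rightarrow> lab GL w),
               att = (\<lambda>x. case x of Inl v \<Rightarrow> if v \<in> Rr - Ll then map \<phi> (att K v) else []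
                                 | Inr w \<Rightarrow> map Inr (att GL w)) \<rparr>
     in restr H (\<phi> r))"

definition pj :: "'f sig \<Rightarrow> ('f \<Rightarrow> nat) \<Rightarrow> nat \<Rightarrow> ('v, 'f) tgraph \<Rightarrow> nat" where
  "pj S rk lv G = (1 + lv) ^ (2 * rk (the (lab G (root G))))
      * (1 + (\<Sum>u\<in>nrm S G (root G). depth (restr G u)))"

definition sedges :: "'f sig \<Rightarrow> ('v, 'f, 'z) lgraph_scheme \<Rightarrow> ('v \<times> 'v) set" where
  "sedges S G = {(v, u). v \<in> nodes G \<and> u \<in> safe S G v}"

definition SP :: "'f sig \<Rightarrow> ('v, 'f, 'z) lgraph_scheme \<Rightarrow> 'v \<Rightarrow> 'v set" where
  "SP S G v = {u. (v, u) \<in> (sedges S G)\<^sup>*}"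

definition interp :: "'f sig \<Rightarrow> ('f \<Rightarrow> nat) \<Rightarrow> nat \<Rightarrow> ('v, 'f) tgraph \<Rightarrow> nat" where
  "interp S rk lv G = (\<Sum>v\<in>{v\<in>SP S G (root G). \<not> tg_C S (restr G v)}. pj S rk lv (restr G v))"

end

theory Submission
  imports Defs
begin


definition attok :: "('v,'f,'z) lgraph_scheme \<Rightarrow> bool" where
 "attok G \<longleftrightarrow> (\<forall>v. v \<notin> nodes G \<longrightarrow> att G v = [])"

lemma wf_attok: "wf_lgraph S G \<Longrightarrow> attok G"
  by (simp add: wf_lgraph_def attok_def)

lemma edge_reach: "a \<in> reach G v \<Longrightarrow> (a,b) \<in> edges G \<Longrightarrow> b \<in> reach G v"
  unfolding reach_def by (auto intro: rtrancl_into_rtrancl)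

lemma reach_trans: "a \<in> reach G v \<Longrightarrow> b \<in> reach G a \<Longrightarrow> b \<in> reach G v"
  unfolding reach_def by (auto intro: rtrancl_trans)

lemma reach_refl[simp]: "v \<in> reach G v" by (simp add: reach_def)

lemma edges_restr: "attok G \<Longrightarrow> edges (restr G v) = {(a,b). (a,b) \<in> edges G \<and> a \<in> reach G v}"
  unfolding edges_def restr_def attok_def by auto

lemma reach_restr: assumes "attok G" "u \<in> reach G v"
  shows "reach (restr G v) u = reach G u"
proof
  show "reach (restr G v) u \<subseteq> reach G u"
  proof -
    have "edges (restr G v) \<subseteq> edges G" using edges_restr[OF assms(1)] by auto
    then show ?thesis unfolding reach_def using rtrancl_mono by blast
  qed
next
  { fix x assume "(u,x) \<in> (edges G)\<^sup>*"
    hence "x \<in> reach G v \<and> (u,x) \<in> (edges (restr G v))\<^sup>*"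
    proof (induction rule: rtrancl_induct)
      case base then show ?case using assms by simp
    next
      case (step y z)
      then show ?case using edges_restr[OF assms(1)] edge_reach
        by (metis (mono_tags, lifting) case_prodI mem_Collect_eq rtrancl.rtrancl_into_rtrancl)
    qed }
  then show "reach G u \<subseteq> reach (restr G v) u" unfolding reach_def by auto
qed

lemma reach_sub: "u \<in> reach G v \<Longrightarrow> reach G u \<subseteq> reach G v"
  using reach_trans[of u G v] by auto

lemma restr_restr: assumes "attok G" "u \<in> reach G v"
  shows "restr (restr G v) u = restr G u"
proof -
  have 1: "reach (restr G v) u = reach G u" by (rule reach_restr[OF assms])
  have 2: "reach G u \<subseteq> reach G v" by (rule reach_sub[OF assms(2)])
  show ?thesis
    apply (subst restr_def[of "restr G v"])
    apply (simp only: 1)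
    using 2 by (auto simp: restr_def intro!: ext)
qed

lemma lab_restr[simp]: "u \<in> reach G v \<Longrightarrow> lab (restr G v) u = lab G u"
  by (simp add: restr_def)
lemma att_restr[simp]: "u \<in> reach G v \<Longrightarrow> att (restr G v) u = att G u"
  by (simp add: restr_def)
lemma nodes_restr[simp]: "nodes (restr G v) = reach G v"
  by (simp add: restr_def)
lemma root_restr[simp]: "root (restr G v) = v"
  by (simp add: restr_def)

lemma nrm_restr: "u \<in> reach G v \<Longrightarrow> nrm S (restr G v) u = nrm S G u"
  by (simp add: nrm_def)
lemma safe_restr: "u \<in> reach G v \<Longrightarrow> safe S (restr G v) u = safe S G u"
  by (simp add: safe_def)

lemma nrm_map: "lab G' x = lab G y \<Longrightarrow> att G' x = map f (att G y) \<Longrightarrow> nrm S G' x = f ` nrm S G y"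
  unfolding nrm_def apply (auto simp: image_def)
  apply (blast | (rule_tac x=i in exI, simp))+
  done
lemma safe_map: "lab G' x = lab G y \<Longrightarrow> att G' x = map f (att G y) \<Longrightarrow> safe S G' x = f ` safe S G y"
  unfolding safe_def apply (auto simp: image_def)
  apply (blast | (rule_tac x=i in exI, simp))+
  done

lemma nrm_att: "nrm S G v \<subseteq> set (att G v)"
  unfolding nrm_def by auto
lemma safe_att: "safe S G v \<subseteq> set (att G v)"
  unfolding safe_def by auto
lemma att_nrm_safe: "lab G v \<noteq> None \<Longrightarrow> set (att G v) = nrm S G v \<union> safe S G v"
  unfolding nrm_def safe_def by (auto simp: in_set_conv_nth) blast

lemma nrm_None: "lab G v = None \<Longrightarrow> nrm S G v = {}"
  unfolding nrm_def by auto

lemma tg_C_sub: "attok G \<Longrightarrow> tg_C S (restr G u) \<Longrightarrow> w \<in> reach G u \<Longrightarrow> tg_C S (restr G w)"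
  unfolding tg_C_def using reach_sub by (fastforce simp: restr_def)




definition dep :: "('v,'f,'z) lgraph_scheme \<Rightarrow> 'v \<Rightarrow> nat" where
  "dep G v = Max {length xs - 1 | xs. gpath G xs \<and> hd xs = v}"

lemma gpath_reach: assumes "gpath G xs" "hd xs = v" shows "i < length xs \<Longrightarrow> xs ! i \<in> reach G v"
proof (induction i)
  case 0 then show ?case using assms by (simp add: gpath_def hd_conv_nth)
next
  case (Suc i)
  then have "(xs!i, xs!Suc i) \<in> edges G" using assms(1) unfolding gpath_def by auto
  with Suc show ?case using edge_reach by (metis Suc_lessD)
qed

lemma gpath_restr: assumes "attok G" "hd xs = v"
  shows "gpath (restr G v) xs \<longleftrightarrow> gpath G xs"
proof
  assume "gpath (restr G v) xs" then show "gpath G xs" using edges_restr[OF assms(1)] unfolding gpath_def by auto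
next
  assume a: "gpath G xs"
  show "gpath (restr G v) xs" unfolding gpath_def
  proof (intro conjI allI impI)
    show "xs \<noteq> []" using a gpath_def by auto
    fix i assume i: "Suc i < length xs"
    have "xs ! i \<in> reach G v" using gpath_reach[OF a assms(2), of i] i by auto
    then show "(xs!i, xs!Suc i) \<in> edges (restr G v)"
      using a i edges_restr[OF assms(1)] unfolding gpath_def by auto
  qed
qed

lemma depth_restr: "attok G \<Longrightarrow> depth (restr G v) = dep G v"
  unfolding depth_def dep_def by (rule arg_cong[where f=Max]) (auto simp: gpath_restr)

lemma gpath_trancl: assumes "gpath G xs" shows "j < length xs \<Longrightarrow> i < j \<Longrightarrow> (xs!i, xs!j) \<in> (edges G)\<^sup>+"
proof (induction j)
  case 0 then show ?case by simp
next
  case (Suc j)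
  have e: "(xs!j, xs!Suc j) \<in> edges G" using assms Suc.prems unfolding gpath_def by auto
  show ?case proof (cases "i = j")
    case True then show ?thesis using e by auto
  next
    case False then have "(xs!i, xs!j) \<in> (edges G)\<^sup>+" using Suc by auto
    then show ?thesis using e by (auto intro: trancl_into_trancl)
  qed
qed

lemma gpath_distinct: assumes "acyclic (edges G)" "gpath G xs" shows "distinct xs"
  unfolding distinct_conv_nth
proof (intro allI impI)
  fix i j assume ij: "i < length xs" "j < length xs" "i \<noteq> j"
  show "xs ! i \<noteq> xs ! j"
  proof
    assume eq: "xs ! i = xs ! j"
    have "(xs!(min i j), xs!(max i j)) \<in> (edges G)\<^sup>+"
      using gpath_trancl[OF assms(2)] ij by (simp add: max_def min_def)
    then show False using eq assms(1) unfolding acyclic_def by (simp add: max_def min_def split: if_splits)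
  qed
qed

lemma gpath_tl_nodes: assumes "wf_lgraph S G" "gpath G xs" shows "set (tl xs) \<subseteq> nodes G"
proof
  fix x assume "x \<in> set (tl xs)"
  then obtain k where k: "k < length (tl xs)" "x = tl xs ! k" by (metis in_set_conv_nth)
  then have "x = xs ! Suc k" "Suc k < length xs" by (auto simp: nth_tl)
  then have "(xs!k, x) \<in> edges G" using assms(2) unfolding gpath_def by auto
  then show "x \<in> nodes G" using assms(1) unfolding edges_def wf_lgraph_def by auto
qed

lemma gpath_len: assumes "wf_lgraph S G" "gpath G xs" shows "length xs - 1 \<le> card (nodes G)"
proof -
  have d: "distinct (tl xs)" using gpath_distinct assms wf_lgraph_def distinct_tl by metis
  have f: "finite (nodes G)" using assms(1) wf_lgraph_def by auto
  have "length xs - 1 = card (set (tl xs))" using distinct_card[OF d] by simp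
  also have "\<dots> \<le> card (nodes G)" using card_mono[OF f gpath_tl_nodes[OF assms]] .
  finally show ?thesis .
qed

lemma dep_fin: "wf_lgraph S G \<Longrightarrow> finite {length xs - 1 | xs. gpath G xs \<and> hd xs = v}"
  by (rule finite_subset[of _ "{..card (nodes G)}"]) (auto dest: gpath_len)

lemma gpath_single: "gpath G [v]" by (simp add: gpath_def)

lemma dep_ne: "{length xs - 1 | xs. gpath G xs \<and> hd xs = v} \<noteq> {}"
  using gpath_single by fastforce

lemma dep_edge: assumes "wf_lgraph S G" "(a,b) \<in> edges G" shows "dep G b \<le> dep G a"
proof -
  have "dep G b \<in> {length xs - 1 | xs. gpath G xs \<and> hd xs = b}"
    unfolding dep_def by (rule Max_in[OF dep_fin[OF assms(1)] dep_ne])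
  then obtain ys where ys: "gpath G ys" "hd ys = b" "dep G b = length ys - 1" by auto
  have "gpath G (a # ys)" unfolding gpath_def
  proof (intro conjI allI impI)
    show "a # ys \<noteq> []" by simp
    fix i assume i: "Suc i < length (a # ys)"
    show "((a # ys) ! i, (a # ys) ! Suc i) \<in> edges G"
    proof (cases i)
      case 0
      have "ys \<noteq> []" using ys(1) gpath_def by auto
      then show ?thesis using 0 ys assms(2) by (simp add: hd_conv_nth)
    next
      case (Suc k) then show ?thesis using ys i gpath_def by auto
    qed
  qed
  then have "length (a#ys) - 1 \<in> {length xs - 1 | xs. gpath G xs \<and> hd xs = a}" by force
  then have "length (a#ys) - 1 \<le> dep G a" unfolding dep_def by (rule Max_ge[OF dep_fin[OF assms(1)]])
  then show ?thesis using ys by simp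
qed

lemma dep_mono: assumes "wf_lgraph S G" "(a,b) \<in> (edges G)\<^sup>*" shows "dep G b \<le> dep G a"
  using assms(2)
proof (induction rule: rtrancl_induct)
  case base then show ?case by simp
next
  case (step y z) then show ?case using dep_edge[OF assms(1)] le_trans by blast
qed

lemma inr_all: assumes E: "\<And>a z. (Inr a, z) \<in> edges H \<longleftrightarrow> (\<exists>b. z = Inr b \<and> (a,b) \<in> edges G)"
  and p: "gpath H xs" "hd xs = Inr w"
  shows "i < length xs \<Longrightarrow> \<exists>b. xs ! i = Inr b"
proof (induction i)
  case 0 then show ?case using p by (auto simp: gpath_def hd_conv_nth)
next
  case (Suc i)
  then obtain b where "xs ! i = Inr b" by auto
  moreover have "(xs!i, xs!Suc i) \<in> edges H" using p Suc.prems gpath_def by auto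
  ultimately show ?case using E by auto
qed

lemma inr_paths: assumes E: "\<And>a z. (Inr a, z) \<in> edges H \<longleftrightarrow> (\<exists>b. z = Inr b \<and> (a,b) \<in> edges G)"
  shows "{length xs - 1 | xs. gpath H xs \<and> hd xs = Inr w} = {length ys - 1 | ys. gpath G ys \<and> hd ys = w}"
proof (intro set_eqI iffI)
  fix n assume "n \<in> {length xs - 1 | xs. gpath H xs \<and> hd xs = Inr w}"
  then obtain xs where xs: "gpath H xs" "hd xs = Inr w" "n = length xs - 1" by auto
  have all: "\<forall>i<length xs. \<exists>b. xs ! i = Inr b" using inr_all[OF E xs(1,2)] by auto
  define ys where "ys = map projr xs"
  have xs_eq: "xs = map Inr ys" unfolding ys_def
    by (rule nth_equalityI) (use all in auto)
  have ne: "xs \<noteq> []" using xs gpath_def by auto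
  have "gpath G ys" unfolding gpath_def
  proof (intro conjI allI impI)
    show "ys \<noteq> []" using ne ys_def by auto
    fix i assume i: "Suc i < length ys"
    have "(xs!i, xs!Suc i) \<in> edges H" using xs(1) i ys_def gpath_def by auto
    then show "(ys!i, ys!Suc i) \<in> edges G" using E i unfolding xs_eq by auto
  qed
  moreover have "hd ys = w" using xs(2) ne xs_eq by (cases ys) auto
  ultimately show "n \<in> {length ys - 1 | ys. gpath G ys \<and> hd ys = w}" using xs(3) xs_eq by auto
next
  fix n assume "n \<in> {length ys - 1 | ys. gpath G ys \<and> hd ys = w}"
  then obtain ys where ys: "gpath G ys" "hd ys = w" "n = length ys - 1" by auto
  have "gpath H (map Inr ys)" using ys(1) E unfolding gpath_def by auto
  moreover have "hd (map Inr ys) = Inr w" using ys gpath_def by (cases ys) auto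
  ultimately show "n \<in> {length xs - 1 | xs. gpath H xs \<and> hd xs = Inr w}" using ys(3) by force
qed

lemma inr_dep: assumes E: "\<And>a z. (Inr a, z) \<in> edges H \<longleftrightarrow> (\<exists>b. z = Inr b \<and> (a,b) \<in> edges G)"
  shows "dep H (Inr w) = dep G w"
  unfolding dep_def using inr_paths[OF E] by simp

lemma inr_reach: fixes H :: "('u + 'w, 'f, 'z) lgraph_scheme" and G :: "('w, 'f, 'y) lgraph_scheme"
  assumes E: "\<And>a z. (Inr a, z) \<in> edges H \<longleftrightarrow> (\<exists>b. z = Inr b \<and> (a,b) \<in> edges G)"
  shows "reach H (Inr w) = Inr ` reach G w"
proof (intro set_eqI iffI)
  fix z :: "'u + 'w" assume "z \<in> reach H (Inr w)"
  then have "(Inr w, z) \<in> (edges H)\<^sup>*" by (simp add: reach_def)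
  then have "\<exists>b. z = Inr b \<and> (w,b) \<in> (edges G)\<^sup>*"
    by (induction rule: rtrancl_induct) (auto simp: E intro: rtrancl_into_rtrancl)
  then show "z \<in> Inr ` reach G w" by (auto simp: reach_def)
next
  fix z :: "'u + 'w" assume "z \<in> Inr ` reach G w"
  then obtain b where b: "z = Inr b" "(w,b) \<in> (edges G)\<^sup>*" by (auto simp: reach_def)
  from b(2) have "(Inr w, Inr b) \<in> (edges H)\<^sup>*"
    by (induction rule: rtrancl_induct) (auto simp: E intro: rtrancl_into_rtrancl)
  then show "z \<in> reach H (Inr w)" using b by (simp add: reach_def)
qed




lemma att_reach: "attok G \<Longrightarrow> v \<in> set (att G y) \<Longrightarrow> v \<in> reach G y"
  unfolding attok_def reach_def edges_def by (metis (mono_tags, lifting) case_prodI empty_iff empty_set mem_Collect_eq r_into_rtrancl)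

lemma reach_nodes: "wf_lgraph S G \<Longrightarrow> v \<in> nodes G \<Longrightarrow> reach G v \<subseteq> nodes G"
proof
  fix x assume w: "wf_lgraph S G" and v: "v \<in> nodes G" and "x \<in> reach G v"
  then have "(v,x) \<in> (edges G)\<^sup>*" by (simp add: reach_def)
  then show "x \<in> nodes G" using v w
    by (induction rule: rtrancl_induct) (auto simp: edges_def wf_lgraph_def)
qed

lemma sedges_sub: "sedges S G \<subseteq> edges G"
  unfolding sedges_def edges_def using safe_att by fastforce

lemma SP_reach: "SP S G v \<subseteq> reach G v"
  unfolding SP_def reach_def using rtrancl_mono[OF sedges_sub] by blast

lemma pt_lab: "pt S prec H G \<Longrightarrow> v \<in> nodes H \<Longrightarrow> lab H v = Some g \<Longrightarrow> prec g (the (lab G (root G)))"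
  by (erule pt.cases) auto

locale rwl =
  fixes S :: "'f sig" and prec :: "'f \<Rightarrow> 'f \<Rightarrow> bool" and rk :: "'f \<Rightarrow> nat"
    and K :: "('v, 'f) lgraph" and l r :: 'v
    and GL :: "('w, 'f) tgraph" and \<psi> :: "'v \<Rightarrow> 'w" and lv :: nat
  assumes wfS: "wf_sig S" and precd: "precedence S prec rk" and cr: "constructor_rule S K l r"
    and ptr: "pt S prec (restr K r) (restr K l)"
    and wfGL: "wf_tgraph S GL" and nrmGL: "tg_nrm S GL"
    and hom: "is_hom (restr K l) GL \<psi>"
    and lvpos: "0 < lv" and cardr: "card (nodes (restr K r)) \<le> lv"
begin

lemma wfK: "wf_lgraph S K" using cr by (simp add: constructor_rule_def graph_rule_def)
lemma attK: "attok K" using wfK wf_attok by blast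
lemma lK: "l \<in> nodes K" using cr by (simp add: constructor_rule_def graph_rule_def)
lemma rK: "r \<in> nodes K" using cr by (simp add: constructor_rule_def graph_rule_def)
lemma wfGL': "wf_lgraph S GL" using wfGL by (simp add: wf_tgraph_def)
lemma attGL: "attok GL" using wfGL' wf_attok by blast
lemma GLnodes: "nodes GL = reach GL (root GL)" using wfGL by (simp add: wf_tgraph_def)
lemma rootGL: "root GL \<in> nodes GL" using wfGL by (simp add: wf_tgraph_def)
lemma finGL: "finite (nodes GL)" using wfGL' by (simp add: wf_lgraph_def)
lemma finK: "finite (nodes K)" using wfK by (simp add: wf_lgraph_def)
lemma acycGL: "acyclic (edges GL)" using wfGL' by (simp add: wf_lgraph_def)

lemma unl_in_Ll: "v \<in> reach K r \<Longrightarrow> lab K v = None \<Longrightarrow> v \<in> reach K l"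
  using cr unfolding constructor_rule_def graph_rule_def by auto

lemma basicK: "basic S (restr K l)" using cr by (simp add: constructor_rule_def)

definition f0 where "f0 = the (lab K l)"

lemma labl: "lab K l = Some f0" "f0 \<in> defs S"
  using basicK unfolding basic_def f0_def by auto

lemma basicargs: "u \<in> set (att K l) \<Longrightarrow> tg_C S (restr K u)"
proof -
  assume u: "u \<in> set (att K l)"
  then have "u \<in> reach K l" by (rule att_reach[OF attK])
  then have "restr (restr K l) u = restr K u" by (rule restr_restr[OF attK])
  then show ?thesis using basicK u by (auto simp: basic_def)
qed

lemma cons_nrmp: "c \<in> cons S \<Longrightarrow> nrmp S c = {}" using wfS by (simp add: wf_sig_def)
lemma cons_defs: "c \<in> cons S \<Longrightarrow> c \<notin> defs S" using wfS by (auto simp: wf_sig_def)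
lemma prec_cons: "c \<in> cons S \<Longrightarrow> \<not> prec g c" using precd by (simp add: precedence_def)
lemma prec_irr: "\<not> prec g g" using precd by (simp add: precedence_def)
lemma prec_rk: "prec g f \<Longrightarrow> rk g < rk f" using precd by (simp add: precedence_def)

lemma psil: "\<psi> l = root GL" using hom by (simp add: is_hom_def)

lemma lab_edge: "(x,y) \<in> edges K \<Longrightarrow> lab K x \<noteq> None"
  using wfK unfolding edges_def wf_lgraph_def by (fastforce split: option.splits)

lemma hom_nodes: "x \<in> reach K l \<Longrightarrow> \<psi> x \<in> nodes GL"
  using hom by (simp add: is_hom_def)

lemma hom_at: "x \<in> reach K l \<Longrightarrow> lab K x \<noteq> None \<Longrightarrow> lab GL (\<psi> x) = lab K x \<and> att GL (\<psi> x) = map \<psi> (att K x)"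
  using hom by (simp add: is_hom_def)

lemma hom_edge: "x \<in> reach K l \<Longrightarrow> (x,y) \<in> edges K \<Longrightarrow> (\<psi> x, \<psi> y) \<in> edges GL"
  using hom_at[of x] lab_edge[of x y] hom_nodes[of x] by (auto simp: edges_def)

lemma hom_reach: "x \<in> reach K l \<Longrightarrow> (x,y) \<in> (edges K)\<^sup>* \<Longrightarrow> (\<psi> x, \<psi> y) \<in> (edges GL)\<^sup>*"
proof -
  assume x: "x \<in> reach K l" and xy: "(x,y) \<in> (edges K)\<^sup>*"
  from xy show ?thesis
  proof (induction rule: rtrancl_induct)
    case base then show ?case by simp
  next
    case (step y z)
    then have "y \<in> reach K l" using reach_trans[of x K l y] x by (simp add: reach_def)
    then show ?case using step hom_edge by (meson rtrancl.rtrancl_into_rtrancl)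
  qed
qed

lemma nrmGLroot: "nrm S GL (root GL) = \<psi> ` nrm S K l"
  using hom_at[of l] labl psil by (auto intro!: nrm_map)
lemma safeGLroot: "safe S GL (root GL) = \<psi> ` safe S K l"
  using hom_at[of l] labl psil by (auto intro!: safe_map)

lemma rootGL_not_C: "\<not> tg_C S GL"
  using rootGL hom_at[of l] labl psil cons_defs unfolding tg_C_def by force

lemma GL_nrm_C: "v \<in> nrm S GL (root GL) \<Longrightarrow> tg_C S (restr GL v)"
  using nrmGL rootGL_not_C by (cases rule: tg_nrm.cases) auto

lemma l_notin_Rr: "l \<notin> reach K r"
proof
  assume "l \<in> reach K r"
  then have "prec f0 f0" using pt_lab[OF ptr, of l f0] labl by simp
  then show False using prec_irr by blast
qed

lemma Rr_prec: "y \<in> reach K r \<Longrightarrow> lab K y = Some g \<Longrightarrow> prec g f0"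
  using pt_lab[OF ptr, of y g] labl by simp

end


context rwl begin

lemma cons_safe_path:
  assumes u: "u \<in> set (att K l)" and uv: "(u,v) \<in> (edges K)\<^sup>*"
  shows "(\<psi> u, \<psi> v) \<in> (sedges S GL)\<^sup>*"
  using uv
proof (induction rule: rtrancl_induct)
  case base then show ?case by simp
next
  case (step y z)
  have ul: "u \<in> reach K l" using u by (rule att_reach[OF attK])
  have yu: "y \<in> reach K u" using step(1) by (simp add: reach_def)
  have yl: "y \<in> reach K l" using reach_trans[OF ul yu] .
  obtain c where c: "lab K y = Some c" using lab_edge[OF step(2)] by auto
  have "tg_C S (restr K u)" using basicargs[OF u] .
  then have cc: "c \<in> cons S" using yu c unfolding tg_C_def by auto
  have zatt: "z \<in> set (att K y)" using step(2) by (simp add: edges_def)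
  have "z \<in> safe S K y" using zatt c cons_nrmp[OF cc] unfolding safe_def by (auto simp: in_set_conv_nth)
  moreover have "safe S GL (\<psi> y) = \<psi> ` safe S K y" using hom_at[OF yl] c by (auto intro!: safe_map)
  ultimately have "(\<psi> y, \<psi> z) \<in> sedges S GL" using hom_nodes[OF yl] by (auto simp: sedges_def)
  then show ?case using step(3) by (meson rtrancl.rtrancl_into_rtrancl)
qed

lemma LL:
  assumes v: "v \<in> reach K l" "v \<noteq> l"
  shows "\<psi> v \<in> nodes GL \<and> \<psi> v \<noteq> root GL \<and> (tg_C S (restr GL (\<psi> v)) \<or> \<psi> v \<in> SP S GL (root GL))"
proof -
  from v(1) have "(l,v) \<in> (edges K)\<^sup>*" by (simp add: reach_def)
  then obtain u where lu: "(l,u) \<in> edges K" and uv: "(u,v) \<in> (edges K)\<^sup>*"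
    using v(2) by (auto elim: converse_rtranclE)
  have u: "u \<in> set (att K l)" using lu by (simp add: edges_def)
  have ul: "u \<in> reach K l" using u by (rule att_reach[OF attK])
  have n: "\<psi> v \<in> nodes GL" using hom_nodes[OF v(1)] .
  have e1: "(\<psi> l, \<psi> u) \<in> edges GL" using hom_edge[OF _ lu] by simp
  have e2: "(\<psi> u, \<psi> v) \<in> (edges GL)\<^sup>*" using hom_reach[OF ul uv] .
  have ne: "\<psi> v \<noteq> root GL"
  proof
    assume "\<psi> v = root GL"
    then have e2': "(\<psi> u, \<psi> l) \<in> (edges GL)\<^sup>*" using e2 psil by simp
    have "(\<psi> l, \<psi> l) \<in> (edges GL)\<^sup>+" by (rule rtrancl_into_trancl2[OF e1 e2'])
    then show False using acycGL by (simp add: acyclic_def)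
  qed
  have "u \<in> nrm S K l \<or> u \<in> safe S K l" using att_nrm_safe[of K l S] labl u by auto
  then have "tg_C S (restr GL (\<psi> v)) \<or> \<psi> v \<in> SP S GL (root GL)"
  proof
    assume "u \<in> nrm S K l"
    then have "tg_C S (restr GL (\<psi> u))" using GL_nrm_C nrmGLroot by auto
    moreover have "\<psi> v \<in> reach GL (\<psi> u)" using e2 by (simp add: reach_def)
    ultimately show ?thesis using tg_C_sub[OF attGL] by simp
  next
    assume "u \<in> safe S K l"
    then have "\<psi> u \<in> safe S GL (root GL)" using safeGLroot by auto
    then have "(root GL, \<psi> u) \<in> sedges S GL" using rootGL by (simp add: sedges_def)
    then have "(root GL, \<psi> v) \<in> (sedges S GL)\<^sup>*" using converse_rtrancl_into_rtrancl cons_safe_path[OF u uv] by metis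
    then show ?thesis by (simp add: SP_def)
  qed
  then show ?thesis using n ne by blast
qed

definition phi :: "'v \<Rightarrow> 'v + 'w" where
  "phi = (\<lambda>u. if u \<in> reach K l then Inr (\<psi> u) else Inl u)"

definition H :: "('v + 'w, 'f) lgraph" where
  "H = \<lparr> nodes = Inl ` (reach K r - reach K l) \<union> Inr ` nodes GL,
               lab = (\<lambda>x. case x of Inl v \<Rightarrow> if v \<in> reach K r - reach K l then lab K v else None
                                 | Inr w \<Rightarrow> lab GL w),
               att = (\<lambda>x. case x of Inl v \<Rightarrow> if v \<in> reach K r - reach K l then map phi (att K v) else []
                                 | Inr w \<Rightarrow> map Inr (att GL w)) \<rparr>"

lemma GR: "rw_root K l r \<psi> GL = restr H (phi r)"
  unfolding rw_root_def Let_def H_def phi_def by simp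

lemma H_Inl: "y \<in> reach K r \<Longrightarrow> y \<notin> reach K l \<Longrightarrow>
   lab H (Inl y) = lab K y \<and> att H (Inl y) = map phi (att K y) \<and> Inl y \<in> nodes H"
  by (simp add: H_def)
lemma H_Inr: "lab H (Inr w) = lab GL w" "att H (Inr w) = map Inr (att GL w)"
  "Inr w \<in> nodes H \<longleftrightarrow> w \<in> nodes GL"
  by (auto simp: H_def)

lemma attH: "attok H"
  using attGL unfolding attok_def H_def by (auto split: sum.splits)

lemma E_H: "(Inr a, z) \<in> edges H \<longleftrightarrow> (\<exists>b. z = Inr b \<and> (a,b) \<in> edges GL)"
  unfolding edges_def using H_Inr by auto

lemma reachH_Inr: "reach H (Inr w) = Inr ` reach GL w"
  by (rule inr_reach[OF E_H])

lemma depthH_Inr: "depth (restr H (Inr w)) = depth (restr GL w)"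
  by (simp add: depth_restr[OF attH] depth_restr[OF attGL] inr_dep[OF E_H])

lemma tgCH_Inr: "tg_C S (restr H (Inr w)) \<longleftrightarrow> tg_C S (restr GL w)"
  unfolding tg_C_def using reachH_Inr H_Inr(1) by (auto simp: restr_def)

lemma pjH_Inr: "pj S rk lv (restr H (Inr w)) = pj S rk lv (restr GL w)"
proof -
  have w1: "Inr w \<in> reach H (Inr w)" by simp
  have w2: "w \<in> reach GL w" by simp
  have n1: "nrm S (restr H (Inr w)) (Inr w) = Inr ` nrm S GL w"
    using nrm_restr[OF w1] nrm_map[of H "Inr w" GL w Inr] H_Inr by simp
  have n2: "nrm S (restr GL w) w = nrm S GL w" using nrm_restr[OF w2] .
  have "(\<Sum>a\<in>Inr ` nrm S GL w. depth (restr (restr H (Inr w)) a))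
        = (\<Sum>b\<in>nrm S GL w. depth (restr (restr H (Inr w)) (Inr b)))"
    by (subst sum.reindex) (auto simp: inj_on_def)
  also have "\<dots> = (\<Sum>b\<in>nrm S GL w. depth (restr (restr GL w) b))"
  proof (rule sum.cong)
    fix b assume b: "b \<in> nrm S GL w"
    then have "b \<in> set (att GL w)" using nrm_att[of S GL w] by auto
    then have br: "b \<in> reach GL w" by (rule att_reach[OF attGL])
    then have "Inr b \<in> reach H (Inr w)" using reachH_Inr by auto
    then have "restr (restr H (Inr w)) (Inr b) = restr H (Inr b)" by (rule restr_restr[OF attH])
    moreover have "restr (restr GL w) b = restr GL b" using restr_restr[OF attGL br] .
    ultimately show "depth (restr (restr H (Inr w)) (Inr b)) = depth (restr (restr GL w) b)"
      using depthH_Inr by simp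
  qed simp
  finally show ?thesis unfolding pj_def using n1 n2 H_Inr(1) w1 w2 by simp
qed

end


context rwl begin

definition Inv where
 "Inv y \<longleftrightarrow> y \<in> reach K r \<and> y \<notin> reach K l \<and> (pt S prec (restr K y) (restr K l)
    \<or> (\<exists>u\<in>set (att K l). lab K u = None \<and> pt S prec (restr K y) (restr K u)))"

lemma fresh_lab: "y \<in> reach K r \<Longrightarrow> y \<notin> reach K l \<Longrightarrow> \<exists>g. lab K y = Some g"
  using unl_in_Ll by (cases "lab K y") auto

lemma safe_reach: "y' \<in> safe S K y \<Longrightarrow> y' \<in> reach K y"
proof -
  assume "y' \<in> safe S K y"
  then have "y' \<in> set (att K y)" using safe_att[of S K y] by auto
  then show ?thesis by (rule att_reach[OF attK])
qed

lemma nrm_reach: "y' \<in> nrm S K y \<Longrightarrow> y' \<in> reach K y"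
proof -
  assume "y' \<in> nrm S K y"
  then have "y' \<in> set (att K y)" using nrm_att[of S K y] by auto
  then show ?thesis by (rule att_reach[OF attK])
qed

lemma safe_pt:
  assumes "\<forall>v\<in>safe S (restr K y) (root (restr K y)). pt S prec (restr (restr K y) v) G"
  shows "\<forall>y'\<in>safe S K y. pt S prec (restr K y') G"
proof
  have yy: "y \<in> reach K y" by simp
  fix y' assume y': "y' \<in> safe S K y"
  then have "y' \<in> reach K y" by (rule safe_reach)
  then have "restr (restr K y) y' = restr K y'" by (rule restr_restr[OF attK])
  then show "pt S prec (restr K y') G" using assms y' safe_restr[OF yy] by auto
qed

lemma invB:
  assumes u: "u \<in> set (att K l)" "lab K u = None" and p: "pt S prec (restr K y) (restr K u)"
  shows "nrm S K y = {} \<and> (\<forall>y'\<in>safe S K y. pt S prec (restr K y') (restr K u))"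
  using p
proof (cases rule: pt.cases)
  case (pt_sub u')
  have "u \<in> nodes K" using u(1) wfK lK unfolding wf_lgraph_def by auto
  then have "att K u = []" using u(2) wfK unfolding wf_lgraph_def by force
  then show ?thesis using pt_sub(2) by simp
next
  case pt_ctx
  have y: "y \<in> reach K y" by simp
  have uu: "u \<in> reach K u" by simp
  have "nrm S (restr K u) u = {}" using nrm_None[of K u] u(2) nrm_restr[OF uu] by simp
  then have "nrm S (restr K y) y = {}" using pt_ctx(3) unfolding nrm_sub_def by auto
  then have n: "nrm S K y = {}" using nrm_restr[OF y] by simp
  show ?thesis using n safe_pt pt_ctx(4) by simp
qed

lemma invA:
  assumes y: "y \<in> reach K r" "y \<notin> reach K l" and p: "pt S prec (restr K y) (restr K l)"
  shows "(\<exists>u\<in>set (att K l). lab K u = None \<and> pt S prec (restr K y) (restr K u)) \<or>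
         ((\<forall>a\<in>nrm S K y. \<exists>v'\<in>nrm S K l. a \<in> reach K v') \<and> (\<forall>y'\<in>safe S K y. pt S prec (restr K y') (restr K l)))"
  using p
proof (cases rule: pt.cases)
  case (pt_sub u)
  have u: "u \<in> set (att K l)" using pt_sub(2) by simp
  have ul: "u \<in> reach K l" using u by (rule att_reach[OF attK])
  have rr: "restr (restr K l) u = restr K u" by (rule restr_restr[OF attK ul])
  have "restr K y \<noteq> restr K u"
  proof
    assume "restr K y = restr K u"
    then have "y = u" by (metis root_restr)
    then show False using ul y by simp
  qed
  then have p2: "pt S prec (restr K y) (restr K u)" using pt_sub(3) rr by simp
  obtain g where g: "lab K y = Some g" using fresh_lab y by blast
  have yy: "y \<in> reach K y" by simp
  have uu: "u \<in> reach K u" by simp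
  have pg: "prec g (the (lab K u))" using pt_lab[OF p2, of y g] g yy uu by simp
  have "lab K u = None"
  proof (rule ccontr)
    assume "lab K u \<noteq> None" then obtain c where c: "lab K u = Some c" by auto
    have "c \<in> cons S" using basicargs[OF u] c uu unfolding tg_C_def by auto
    then show False using prec_cons pg c by simp
  qed
  then show ?thesis using u p2 by blast
next
  case pt_ctx
  have yy: "y \<in> reach K y" by simp
  have ll: "l \<in> reach K l" by simp
  have A: "\<forall>a\<in>nrm S K y. \<exists>v'\<in>nrm S K l. a \<in> reach K v'"
  proof
    fix a assume a: "a \<in> nrm S K y"
    then have "nrm_sub S (restr (restr K y) a) (restr K l)" using pt_ctx(3) nrm_restr[OF yy] by auto
    then obtain v' w where v': "v' \<in> nrm S (restr K l) l" and w: "w \<in> nodes (restr (restr K l) v')"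
      and eq: "restr (restr K y) a = restr (restr (restr K l) v') w" unfolding nrm_sub_def by auto
    have aw: "a = w" using arg_cong[OF eq, of root] by simp
    have v'2: "v' \<in> nrm S K l" using v' nrm_restr[OF ll] by simp
    have "v' \<in> reach K l" using v'2 by (rule nrm_reach)
    then have "w \<in> reach K v'" using w reach_restr[OF attK] by simp
    then show "\<exists>v'\<in>nrm S K l. a \<in> reach K v'" using v'2 aw by blast
  qed
  have B: "\<forall>y'\<in>safe S K y. pt S prec (restr K y') (restr K l)" using safe_pt pt_ctx(4) by simp
  show ?thesis using A B by blast
qed

lemma Inv_nrm: "Inv y \<Longrightarrow> \<forall>a\<in>nrm S K y. \<exists>v'\<in>nrm S K l. a \<in> reach K v'"
  unfolding Inv_def using invA invB by fastforce

lemma Inv_step: assumes "Inv y" "y' \<in> safe S K y" "y' \<notin> reach K l" shows "Inv y'"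
proof -
  have y: "y \<in> reach K r" "y \<notin> reach K l" using assms(1) Inv_def by auto
  have "y' \<in> reach K r" using reach_trans[OF y(1) safe_reach[OF assms(2)]] .
  moreover have "pt S prec (restr K y') (restr K l)
    \<or> (\<exists>u\<in>set (att K l). lab K u = None \<and> pt S prec (restr K y') (restr K u))"
    using assms(1,2) invA[OF y] invB unfolding Inv_def by metis
  ultimately show ?thesis using assms(3) Inv_def by auto
qed

definition Q :: "'v + 'w \<Rightarrow> bool" where
  "Q x = (case x of Inl y \<Rightarrow> Inv y
     | Inr w \<Rightarrow> w \<in> nodes GL \<and> w \<noteq> root GL \<and> (tg_C S (restr GL w) \<or> w \<in> SP S GL (root GL)))"

lemma Qphi: "y \<in> reach K r \<Longrightarrow> (y \<notin> reach K l \<Longrightarrow> Inv y) \<Longrightarrow> Q (phi y)"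
proof (cases "y \<in> reach K l")
  case True
  assume "y \<in> reach K r"
  then have "y \<noteq> l" using l_notin_Rr by auto
  then show ?thesis using LL[OF True] True by (simp add: phi_def Q_def)
next
  case False
  assume "y \<notin> reach K l \<Longrightarrow> Inv y"
  then show ?thesis using False by (simp add: phi_def Q_def)
qed

lemma SP_GR: "x \<in> SP S (restr H (phi r)) (phi r) \<Longrightarrow> x \<in> reach H (phi r) \<and> Q x"
  unfolding SP_def
proof (simp, induction rule: rtrancl_induct)
  case base
  have "r \<in> reach K r" by simp
  moreover have "r \<notin> reach K l \<Longrightarrow> Inv r" using ptr by (simp add: Inv_def)
  ultimately show ?case using Qphi by simp
next
  case (step y z)
  have yr: "y \<in> reach H (phi r)" and zs: "z \<in> safe S H y"
    using step(2) safe_restr[of y H "phi r"] by (auto simp: sedges_def)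
  have "z \<in> set (att H y)" using zs safe_att[of S H y] by auto
  then have "z \<in> reach H y" by (rule att_reach[OF attH])
  then have zr: "z \<in> reach H (phi r)" using reach_trans[OF yr] by simp
  have Qy: "Q y" using step(3) by simp
  have "Q z"
  proof (cases y)
    case (Inl a)
    then have Ia: "Inv a" using Qy by (simp add: Q_def)
    then have a: "a \<in> reach K r" "a \<notin> reach K l" by (auto simp: Inv_def)
    have "safe S H (Inl a) = phi ` safe S K a" using H_Inl[OF a] by (auto intro!: safe_map)
    then obtain a' where a': "a' \<in> safe S K a" "z = phi a'" using zs Inl by auto
    have "a' \<in> reach K r" using reach_trans[OF a(1) safe_reach[OF a'(1)]] .
    then show ?thesis using Qphi Inv_step[OF Ia a'(1)] a' by simp
  next
    case (Inr w)
    then have w: "w \<in> nodes GL" "w \<noteq> root GL" "tg_C S (restr GL w) \<or> w \<in> SP S GL (root GL)"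
      using Qy by (auto simp: Q_def)
    have "safe S H (Inr w) = Inr ` safe S GL w" using H_Inr by (auto intro!: safe_map)
    then obtain w' where w': "w' \<in> safe S GL w" "z = Inr w'" using zs Inr by auto
    have w'att: "w' \<in> set (att GL w)" using w'(1) safe_att[of S GL w] by auto
    have ew: "(w, w') \<in> edges GL" using w(1) w'att by (simp add: edges_def)
    have n': "w' \<in> nodes GL" using w(1) w'att wfGL' unfolding wf_lgraph_def by auto
    have ne': "w' \<noteq> root GL"
    proof
      assume "w' = root GL"
      moreover have "(root GL, w) \<in> (edges GL)\<^sup>*" using w(1) GLnodes by (simp add: reach_def)
      ultimately have "(root GL, root GL) \<in> (edges GL)\<^sup>+" using ew by (simp add: rtrancl_into_trancl1)
      then show False using acycGL by (simp add: acyclic_def)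
    qed
    have "tg_C S (restr GL w') \<or> w' \<in> SP S GL (root GL)"
      using w(3)
    proof
      assume "tg_C S (restr GL w)"
      moreover have "w' \<in> reach GL w" using w'att by (rule att_reach[OF attGL])
      ultimately show ?thesis using tg_C_sub[OF attGL] by simp
    next
      assume "w \<in> SP S GL (root GL)"
      moreover have "(w, w') \<in> sedges S GL" using w(1) w'(1) by (simp add: sedges_def)
      ultimately show ?thesis by (simp add: SP_def rtrancl_into_rtrancl)
    qed
    then show ?thesis using w' n' ne' by (simp add: Q_def)
  qed
  then show ?case using zr by simp
qed

end


context rwl begin

definition N where "N = (\<Sum>u\<in>nrm S GL (root GL). depth (restr GL u))"

lemma finnrm: "finite (nrm S G v)"
  using nrm_att[of S G v] finite_subset by blast

lemma pj_root: "pj S rk lv (restr GL (root GL)) = (1+lv)^(2*rk f0) * (1 + N)"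
proof -
  have rr: "root GL \<in> reach GL (root GL)" by simp
  have lab: "lab (restr GL (root GL)) (root GL) = Some f0" using hom_at[of l] labl psil by simp
  have "(\<Sum>u\<in>nrm S (restr GL (root GL)) (root GL). depth (restr (restr GL (root GL)) u)) = N"
    unfolding N_def nrm_restr[OF rr]
  proof (rule sum.cong)
    fix u assume "u \<in> nrm S GL (root GL)"
    then have "u \<in> set (att GL (root GL))" using nrm_att[of S GL "root GL"] by auto
    then have "u \<in> reach GL (root GL)" by (rule att_reach[OF attGL])
    then show "depth (restr (restr GL (root GL)) u) = depth (restr GL u)" using restr_restr[OF attGL] by simp
  qed simp
  then show ?thesis unfolding pj_def using lab by simp
qed

lemma pj_fresh:
  assumes I: "Inv y"
  shows "\<exists>g. lab K y = Some g \<and> prec g f0 \<and> pj S rk lv (restr H (Inl y)) \<le> (1+lv)^(2*rk g) * (1 + lv * N)"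
proof -
  have y: "y \<in> reach K r" "y \<notin> reach K l" using I by (auto simp: Inv_def)
  obtain g where g: "lab K y = Some g" using fresh_lab[OF y] by blast
  have pg: "prec g f0" using Rr_prec[OF y(1) g] .
  have Hy: "lab H (Inl y) = lab K y" "att H (Inl y) = map phi (att K y)" "Inl y \<in> nodes H"
    using H_Inl[OF y] by auto
  have yy: "Inl y \<in> reach H (Inl y)" by simp
  have nr: "nrm S (restr H (Inl y)) (Inl y) = phi ` nrm S K y"
    using nrm_restr[OF yy] nrm_map[of H "Inl y" K y phi] Hy by simp
  have bnd: "depth (restr (restr H (Inl y)) b) \<le> N" if b: "b \<in> phi ` nrm S K y" for b
  proof -
    obtain a where a: "a \<in> nrm S K y" "b = phi a" using b by auto
    obtain v' where v': "v' \<in> nrm S K l" "a \<in> reach K v'" using Inv_nrm[OF I] a(1) by blast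
    have v'l: "v' \<in> reach K l" using v'(1) by (rule nrm_reach)
    have al: "a \<in> reach K l" using reach_trans[OF v'l v'(2)] .
    have ba: "b = Inr (\<psi> a)" using a(2) al by (simp add: phi_def)
    have "b \<in> set (att H (Inl y))" using a Hy(2) nrm_att[of S K y] by auto
    then have "b \<in> reach H (Inl y)" by (rule att_reach[OF attH])
    then have "restr (restr H (Inl y)) b = restr H b" by (rule restr_restr[OF attH])
    then have "depth (restr (restr H (Inl y)) b) = depth (restr GL (\<psi> a))"
      using depthH_Inr ba by simp
    also have "\<dots> = dep GL (\<psi> a)" by (rule depth_restr[OF attGL])
    also have "\<dots> \<le> dep GL (\<psi> v')"
      using dep_mono[OF wfGL' hom_reach[OF v'l]] v'(2) by (simp add: reach_def)
    also have "\<dots> = depth (restr GL (\<psi> v'))" by (rule depth_restr[OF attGL, symmetric])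
    also have "\<dots> \<le> N" unfolding N_def
      by (rule member_le_sum) (use v'(1) nrmGLroot finite_imageI[OF finnrm] in auto)
    finally show ?thesis .
  qed
  have "(\<Sum>b\<in>phi ` nrm S K y. depth (restr (restr H (Inl y)) b)) \<le> card (phi ` nrm S K y) * N"
    using sum_bounded_above[of "phi ` nrm S K y" "\<lambda>b. depth (restr (restr H (Inl y)) b)" N] bnd by simp
  also have "\<dots> \<le> lv * N"
  proof -
    have "nrm S K y \<subseteq> reach K r"
    proof
      fix a assume "a \<in> nrm S K y"
      then have "a \<in> reach K y" by (rule nrm_reach)
      then show "a \<in> reach K r" using reach_trans[OF y(1)] by simp
    qed
    moreover have "finite (reach K r)" using reach_nodes[OF wfK rK] finK finite_subset by blast
    ultimately have "card (nrm S K y) \<le> card (reach K r)" by (rule card_mono[rotated])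
    then have "card (phi ` nrm S K y) \<le> lv" using cardr card_image_le[OF finnrm[of K y], of phi] by simp
    then show ?thesis by simp
  qed
  finally have s: "(\<Sum>b\<in>phi ` nrm S K y. depth (restr (restr H (Inl y)) b)) \<le> lv * N" .
  have "pj S rk lv (restr H (Inl y)) = (1+lv)^(2*rk g) * (1 + (\<Sum>b\<in>phi ` nrm S K y. depth (restr (restr H (Inl y)) b)))"
    unfolding pj_def using nr Hy(1) g yy by simp
  also have "\<dots> \<le> (1+lv)^(2*rk g) * (1 + lv * N)" using s by simp
  finally show ?thesis using g pg by blast
qed

end



lemma arith1: "(lv::nat) * (1 + lv*N) < (1+lv)^2*(1+N)"
  by (simp add: power2_eq_square algebra_simps)

context rwl begin

lemma finSPGL: "finite (SP S GL (root GL))"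
proof -
  have "SP S GL (root GL) \<subseteq> nodes GL" using SP_reach[of S GL "root GL"] GLnodes by simp
  then show ?thesis using finGL finite_subset by auto
qed

lemma finRr: "finite (reach K r)" using reach_nodes[OF wfK rK] finK finite_subset by auto

lemma fresh_sum:
  assumes F: "finite Fr" "Fr \<subseteq> reach K r" "\<forall>y\<in>Fr. Inv y"
  shows "(\<Sum>y\<in>Fr. pj S rk lv (restr H (Inl y))) < (1+lv)^(2*rk f0) * (1 + N)"
proof (cases "Fr = {}")
  case True then show ?thesis by simp
next
  case False
  then obtain y0 where "y0 \<in> Fr" by auto
  then obtain g0 where "prec g0 f0" using pj_fresh F(3) by blast
  then have rk1: "1 \<le> rk f0" using prec_rk by fastforce
  define P where "P = (1+lv)^(2*(rk f0 - 1))"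
  have Ppos: "0 < P" by (simp add: P_def)
  have each: "pj S rk lv (restr H (Inl y)) \<le> P * (1 + lv*N)" if y: "y \<in> Fr" for y
  proof -
    obtain g where g: "prec g f0" "pj S rk lv (restr H (Inl y)) \<le> (1+lv)^(2*rk g) * (1 + lv * N)"
      using pj_fresh F(3) y by blast
    have "rk g < rk f0" using prec_rk[OF g(1)] .
    then have "(1+lv)^(2*rk g) \<le> P" unfolding P_def by (intro power_increasing) auto
    then have "(1+lv)^(2*rk g) * (1 + lv * N) \<le> P * (1 + lv*N)" by (rule mult_right_mono) simp
    then show ?thesis using g(2) by linarith
  qed
  have "(\<Sum>y\<in>Fr. pj S rk lv (restr H (Inl y))) \<le> card Fr * (P * (1 + lv*N))"
    using sum_bounded_above[of Fr "\<lambda>y. pj S rk lv (restr H (Inl y))" "P * (1 + lv*N)"] each by simp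
  also have "\<dots> \<le> lv * (P * (1 + lv*N))"
  proof -
    have "card Fr \<le> card (reach K r)" using card_mono[OF finRr F(2)] .
    then have "card Fr \<le> lv" using cardr by simp
    then show ?thesis by simp
  qed
  also have "\<dots> = P * (lv * (1 + lv*N))" by (simp add: algebra_simps)
  also have "\<dots> < P * ((1+lv)^2*(1+N))" using arith1 Ppos by simp
  also have "\<dots> = (1+lv)^(2*rk f0) * (1 + N)"
  proof -
    have e: "2*rk f0 = 2*(rk f0 - 1) + 2" using rk1 by simp
    have "(1+lv)^(2*rk f0) = (1+lv)^(2*(rk f0 - 1)) * (1+lv)^2" by (subst e, rule power_add)
    then show ?thesis by (simp only: P_def mult.assoc)
  qed
  finally show ?thesis .
qed

theorem mainloc: "interp S rk lv (restr H (phi r)) < interp S rk lv GL"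
proof -
  define GR where "GR = restr H (phi r)"
  define A where "A = {v \<in> SP S GR (root GR). \<not> tg_C S (restr GR v)}"
  define Fr where "Fr = {y. Inl y \<in> A}"
  define W where "W = {w. Inr w \<in> A}"
  define WL where "WL = {w \<in> SP S GL (root GL). \<not> tg_C S (restr GL w)}"
  have Aprop: "x \<in> reach H (phi r) \<and> Q x \<and> \<not> tg_C S (restr H x) \<and> restr GR x = restr H x" if xA: "x \<in> A" for x
  proof -
    have x: "x \<in> SP S (restr H (phi r)) (phi r)" "\<not> tg_C S (restr GR x)" using xA by (auto simp: A_def GR_def)
    have xr: "x \<in> reach H (phi r) \<and> Q x" using SP_GR[OF x(1)] .
    then have "restr GR x = restr H x" unfolding GR_def by (simp add: restr_restr[OF attH])
    then show ?thesis using x(2) xr by simp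
  qed
  have Asplit: "A = Inl ` Fr \<union> Inr ` W"
  proof (rule set_eqI)
    fix x show "x \<in> A \<longleftrightarrow> x \<in> Inl ` Fr \<union> Inr ` W" by (cases x) (auto simp: Fr_def W_def)
  qed
  have FrInv: "\<forall>y\<in>Fr. Inv y"
  proof
    fix y assume "y \<in> Fr"
    then have "Q (Inl y)" using Aprop Fr_def by auto
    then show "Inv y" by (simp add: Q_def)
  qed
  have FrI: "Fr \<subseteq> reach K r" "\<forall>y\<in>Fr. Inv y" using FrInv by (auto simp: Inv_def)
  have finFr: "finite Fr" using finite_subset[OF FrI(1) finRr] .
  have rootWL: "root GL \<in> WL"
  proof -
    have "root GL \<in> SP S GL (root GL)" by (simp add: SP_def)
    moreover have "\<not> tg_C S (restr GL (root GL))"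
    proof
      assume "tg_C S (restr GL (root GL))"
      moreover have "lab (restr GL (root GL)) (root GL) = Some f0" using hom_at[of l] labl psil by simp
      ultimately have "f0 \<in> cons S" unfolding tg_C_def by auto
      then show False using cons_defs labl(2) by blast
    qed
    ultimately show ?thesis by (simp add: WL_def)
  qed
  have finWL: "finite WL" using finSPGL by (simp add: WL_def)
  have WWL: "W \<subseteq> WL - {root GL}"
  proof
    fix w assume "w \<in> W"
    then have "Inr w \<in> A" by (simp add: W_def)
    then have q: "Q (Inr w)" "\<not> tg_C S (restr H (Inr w))" using Aprop by auto
    then have "\<not> tg_C S (restr GL w)" using tgCH_Inr by simp
    then show "w \<in> WL - {root GL}" using q by (simp add: Q_def WL_def)
  qed
  have finW: "finite W" using finite_subset[OF WWL] finWL by auto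
  have "interp S rk lv GR = (\<Sum>x\<in>A. pj S rk lv (restr H x))"
    unfolding interp_def A_def[symmetric] by (rule sum.cong) (use Aprop in auto)
  also have "\<dots> = (\<Sum>x\<in>Inl ` Fr. pj S rk lv (restr H x)) + (\<Sum>x\<in>Inr ` W. pj S rk lv (restr H x))"
    unfolding Asplit by (rule sum.union_disjoint) (use finFr finW in auto)
  also have "(\<Sum>x\<in>Inl ` Fr. pj S rk lv (restr H x)) = (\<Sum>y\<in>Fr. pj S rk lv (restr H (Inl y)))"
    by (subst sum.reindex) (auto simp: inj_on_def)
  also have "(\<Sum>x\<in>Inr ` W. pj S rk lv (restr H x)) = (\<Sum>w\<in>W. pj S rk lv (restr GL w))"
    by (subst sum.reindex) (auto simp: inj_on_def pjH_Inr)
  also have "(\<Sum>w\<in>W. pj S rk lv (restr GL w)) \<le> (\<Sum>w\<in>WL - {root GL}. pj S rk lv (restr GL w))"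
    by (rule sum_mono2) (use finWL WWL in auto)
  finally have 1: "interp S rk lv GR \<le> (\<Sum>y\<in>Fr. pj S rk lv (restr H (Inl y))) + (\<Sum>w\<in>WL - {root GL}. pj S rk lv (restr GL w))"
    by simp
  have 2: "interp S rk lv GL = pj S rk lv (restr GL (root GL)) + (\<Sum>w\<in>WL - {root GL}. pj S rk lv (restr GL w))"
    unfolding interp_def WL_def[symmetric] using sum.remove[OF finWL rootWL] by simp
  have 3: "(\<Sum>y\<in>Fr. pj S rk lv (restr H (Inl y))) < pj S rk lv (restr GL (root GL))"
    using fresh_sum[OF finFr FrI] pj_root by simp
  show ?thesis using 1 2 3 unfolding GR_def by linarith
qed

end

theorem mainTheorem3:
  fixes S :: "'f sig" and prec :: "'f \<Rightarrow> 'f \<Rightarrow> bool" and rk :: "'f \<Rightarrow> nat"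
    and K :: "('v, 'f) lgraph" and l r :: 'v
    and GL :: "('w, 'f) tgraph" and \<psi> :: "'v \<Rightarrow> 'w" and lv :: nat
  assumes "wf_sig S"
    and "precedence S prec rk"
    and "constructor_rule S K l r"
    and "pt S prec (restr K r) (restr K l)"
    and "wf_tgraph S GL" and "closed GL" and "tg_nrm S GL"
    and "is_hom (restr K l) GL \<psi>"
    and "tg_nrm S (rw_root K l r \<psi> GL)"
    and "0 < lv"
    and "card (nodes (restr K r)) \<le> lv"
  shows "interp S rk lv (rw_root K l r \<psi> GL) < interp S rk lv GL"
proof -
  interpret rwl S prec rk K l r GL \<psi> lv
    by (unfold_locales) (use assms in auto)
  show ?thesis using GR mainloc by simp
qed

end
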